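(* Let $L$ be either $\mathbf{IL}^-(\mathbf{J2}_{+})$ or $\mathbf{CL}$. For any modal formula $A$ the following are equivalent: (i) $L\vdash A$; (ii) $A$ is valid in all simplified $L$-frames; (iii) $A$ is valid in all finite simplified $L$-frames. In particular, $\mathbf{CL}$ has the finite model property with respect to simplified $\mathbf{CL}$-frames.
   Context: Modal formulas are built from propositional variables, $\top$, $\bot$ using $\to,\lor,\land$, unary $\Box$ and binary $\rhd$; $\lnot A:=A\to\bot$, $\Diamond A:=\lnot\Box\lnot A$. The logic $\mathbf{IL}^-$ has as axioms all tautologies, $\Box(A\to B)\to(\Box A\to\Box B)$, $\Box(\Box A\to A)\to\Box A$, $(A\rhd C)\land(B\rhd C)\to(A\lor B)\rhd C$, and $\Box\lnot A\leftrightarrow A\rhd\bot$; its rules are modus ponens, necessitation, from $A\to B$ infer $C\rhd A\to C\rhd B$, and from $A\to B$ infer $B\rhd C\to A\rhd C$. $\mathbf{IL}^-(\mathbf{J2}_{+})$ is $\mathbf{IL}^-$ plus the axiom scheme $\mathbf{J2}_{+}$: $A\rhd(B\lor C)\land B\rhd C\to A\rhd C$. The logic $\mathbf{CL}$ has axioms: all tautologies, $\Box(A\to B)\to(\Box A\to\Box B)$, $\Box(\Box A\to A)\to\Box A$, $\Box(A\to B)\to A\rhd B$, $(A\rhd B)\land(B\rhd C)\to A\rhd C$, $(A\rhd C)\land(B\rhd C)\to(A\lor B)\rhd C$, $A\rhd B\to(\Diamond A\to\Diamond B)$, with rules modus ponens and necessitation. A simplified frame is $(W,R,S)$ with $W$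 non-empty, $R$ a transitive, conversely well-founded binary relation on $W$, $S$ a binary relation on $W$; it is finite if $W$ is. Forcing: arbitrary on variables, Boolean clauses as usual, $x\Vdash\Box A$ iff $y\Vdash A$ for all $y$ with $xRy$, and $x\Vdash A\rhd B$ iff for every $y$ with $xRy$ and $y\Vdash A$ there is $z$ with $xRz$, $ySz$, $z\Vdash B$. $A$ is valid in a frame if it is forced at every point under every forcing relation. A simplified $\mathbf{IL}^-(\mathbf{J2}_{+})$-frame is a simplified frame with $S$ transitive; a simplified $\mathbf{CL}$-frame is a simplified frame with $S$ reflexive and transitive. *)

theory Defs
  imports Main
begin

datatype fm =
    Var nat
  | Top
  | Bot
  | Imp fm fm
  | Or fm fm
  | And fm fm
  | Box fm
  | Rhd fm fm

definition Neg :: "fm \<Rightarrow> fm" where "Neg A = Imp A Bot"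
definition Dia :: "fm \<Rightarrow> fm" where "Dia A = Neg (Box (Neg A))"
definition Iff :: "fm \<Rightarrow> fm \<Rightarrow> fm" where "Iff A B = And (Imp A B) (Imp B A)"

fun peval :: "(fm \<Rightarrow> bool) \<Rightarrow> fm \<Rightarrow> bool" where
  "peval v (Var p) = v (Var p)"
| "peval v Top = True"
| "peval v Bot = False"
| "peval v (Imp A B) = (peval v A \<longrightarrow> peval v B)"
| "peval v (Or A B) = (peval v A \<or> peval v B)"
| "peval v (And A B) = (peval v A \<and> peval v B)"
| "peval v (Box A) = v (Box A)"
| "peval v (Rhd A B) = v (Rhd A B)"

definition tautology :: "fm \<Rightarrow> bool" where
  "tautology A \<longleftrightarrow> (\<forall>v. peval v A)"

datatype logic = IL_J2plus | CL

inductive ILJ2_prov :: "fm \<Rightarrow> bool" where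
  taut: "tautology A \<Longrightarrow> ILJ2_prov A"
| K: "ILJ2_prov (Imp (Box (Imp A B)) (Imp (Box A) (Box B)))"
| L: "ILJ2_prov (Imp (Box (Imp (Box A) A)) (Box A))"
| J3: "ILJ2_prov (Imp (And (Rhd A C) (Rhd B C)) (Rhd (Or A B) C))"
| J4m: "ILJ2_prov (Iff (Box (Neg A)) (Rhd A Bot))"
| J2plus: "ILJ2_prov (Imp (And (Rhd A (Or B C)) (Rhd B C)) (Rhd A C))"
| MP: "ILJ2_prov (Imp A B) \<Longrightarrow> ILJ2_prov A \<Longrightarrow> ILJ2_prov B"
| Nec: "ILJ2_prov A \<Longrightarrow> ILJ2_prov (Box A)"
| R1: "ILJ2_prov (Imp A B) \<Longrightarrow> ILJ2_prov (Imp (Rhd C A) (Rhd C B))"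
| R2: "ILJ2_prov (Imp A B) \<Longrightarrow> ILJ2_prov (Imp (Rhd B C) (Rhd A C))"

inductive CL_prov :: "fm \<Rightarrow> bool" where
  taut: "tautology A \<Longrightarrow> CL_prov A"
| K: "CL_prov (Imp (Box (Imp A B)) (Imp (Box A) (Box B)))"
| L: "CL_prov (Imp (Box (Imp (Box A) A)) (Box A))"
| J1: "CL_prov (Imp (Box (Imp A B)) (Rhd A B))"
| J2: "CL_prov (Imp (And (Rhd A B) (Rhd B C)) (Rhd A C))"
| J3: "CL_prov (Imp (And (Rhd A C) (Rhd B C)) (Rhd (Or A B) C))"
| J4: "CL_prov (Imp (Rhd A B) (Imp (Dia A) (Dia B)))"
| MP: "CL_prov (Imp A B) \<Longrightarrow> CL_prov A \<Longrightarrow> CL_prov B"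
| Nec: "CL_prov A \<Longrightarrow> CL_prov (Box A)"

fun prov :: "logic \<Rightarrow> fm \<Rightarrow> bool" where
  "prov IL_J2plus A = ILJ2_prov A"
| "prov CL A = CL_prov A"

definition simplified_frame :: "'w set \<Rightarrow> 'w rel \<Rightarrow> 'w rel \<Rightarrow> bool" where
  "simplified_frame W R S \<longleftrightarrow>
     W \<noteq> {} \<and> R \<subseteq> W \<times> W \<and> S \<subseteq> W \<times> W \<and> trans R \<and> wf (R\<inverse>)"

fun L_frame :: "logic \<Rightarrow> 'w set \<Rightarrow> 'w rel \<Rightarrow> 'w rel \<Rightarrow> bool" where
  "L_frame IL_J2plus W R S \<longleftrightarrow> simplified_frame W R S \<and> trans S"
| "L_frame CL W R S \<longleftrightarrow> simplified_frame W R S \<and> refl_on W S \<and> trans S"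

fun forces :: "'w rel \<Rightarrow> 'w rel \<Rightarrow> (nat \<Rightarrow> 'w \<Rightarrow> bool) \<Rightarrow> 'w \<Rightarrow> fm \<Rightarrow> bool" where
  "forces R S V x (Var p) = V p x"
| "forces R S V x Top = True"
| "forces R S V x Bot = False"
| "forces R S V x (Imp A B) = (forces R S V x A \<longrightarrow> forces R S V x B)"
| "forces R S V x (Or A B) = (forces R S V x A \<or> forces R S V x B)"
| "forces R S V x (And A B) = (forces R S V x A \<and> forces R S V x B)"
| "forces R S V x (Box A) = (\<forall>y. (x, y) \<in> R \<longrightarrow> forces R S V y A)"
| "forces R S V x (Rhd A B) =
     (\<forall>y. (x, y) \<in> R \<and> forces R S V y A \<longrightarrow>
        (\<exists>z. (x, z) \<in> R \<and> (y, z) \<in> S \<and> forces R S V z B))"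

definition valid_in :: "'w set \<Rightarrow> 'w rel \<Rightarrow> 'w rel \<Rightarrow> fm \<Rightarrow> bool" where
  "valid_in W R S A \<longleftrightarrow> (\<forall>V. \<forall>x\<in>W. forces R S V x A)"

definition valid_all_frames :: "logic \<Rightarrow> 'w itself \<Rightarrow> fm \<Rightarrow> bool" where
  "valid_all_frames L (_ :: 'w itself) A \<longleftrightarrow>
     (\<forall>(W :: 'w set) R S. L_frame L W R S \<longrightarrow> valid_in W R S A)"

definition valid_finite_frames :: "logic \<Rightarrow> 'w itself \<Rightarrow> fm \<Rightarrow> bool" where
  "valid_finite_frames L (_ :: 'w itself) A \<longleftrightarrow>
     (\<forall>(W :: 'w set) R S. L_frame L W R S \<and> finite W \<longrightarrow> valid_in W R S A)"

end

theory Submission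
  imports Defs
begin


lemma peval_forces: "peval (\<lambda>F. forces R S V x F) A = forces R S V x A"
  by (induction A) auto

lemma taut_forces: "tautology A \<Longrightarrow> forces R S V x A"
  unfolding tautology_def using peval_forces by metis

lemma lob_sound:
  assumes "trans R" "wf (R\<inverse>)" "forces R S V x (Box (Imp (Box A) A))"
  shows "forces R S V x (Box A)"
proof -
  have "\<forall>y. (x, y) \<in> R \<longrightarrow> forces R S V y A" 
  proof (intro allI)
    fix y
    show "(x, y) \<in> R \<longrightarrow> forces R S V y A"
      using assms(2)
    proof (induction y rule: wf_induct_rule)
      case (less y)
      show ?case
      proof
        assume xy: "(x,y) \<in> R"
        have "forces R S V y (Box A)"
          using less xy assms(1) by (auto dest: transD)
        then show "forces R S V y A" using assms(3) xy by auto
      qed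
    qed
  qed
  then show ?thesis by simp
qed

lemma sound_IL:
  assumes "ILJ2_prov A" "simplified_frame W R S" "trans S"
  shows "\<forall>V. \<forall>x\<in>W. forces R S V x A"
  using assms(1)
proof (induction A rule: ILJ2_prov.induct)
  case (taut A) then show ?case by (simp add: taut_forces)
next
  case (L A) then show ?case using assms lob_sound unfolding simplified_frame_def
    by (metis forces.simps(4))
next
  case (J3 A C B) then show ?case by auto
next
  case (J4m A) then show ?case by (auto simp: Iff_def Neg_def)
next
  case (J2plus A B C)
  show ?case
  proof (intro allI ballI, simp only: forces.simps, intro impI allI)
    fix V x y
    assume h: "(\<forall>y. (x, y) \<in> R \<and> forces R S V y A \<longrightarrow> (\<exists>z. (x, z) \<in> R \<and> (y, z) \<in> S \<and> (forces R S V z B \<or> forces R S V z C))) \<and>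
       (\<forall>y. (x, y) \<in> R \<and> forces R S V y B \<longrightarrow> (\<exists>z. (x, z) \<in> R \<and> (y, z) \<in> S \<and> forces R S V z C))"
      and y: "(x, y) \<in> R \<and> forces R S V y A"
    then obtain z where z: "(x, z) \<in> R" "(y, z) \<in> S" "forces R S V z B \<or> forces R S V z C" by blast
    show "\<exists>z. (x, z) \<in> R \<and> (y, z) \<in> S \<and> forces R S V z C"
      using z(3)
    proof (elim disjE)
      assume "forces R S V z B"
      then obtain w where "(x, w) \<in> R" "(z, w) \<in> S" "forces R S V w C" using h z by blast
      then show ?thesis using z assms(3) unfolding trans_def by blast
    qed (use z in blast)
  qed
next
  case (Nec A) then show ?case using assms(2) unfolding simplified_frame_def by auto
next
  case (R1 A B C)
  have RW: "(x, y) \<in> R \<Longrightarrow> y \<in> W" for x y using assms(2) unfolding simplified_frame_def by blast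
  show ?case
  proof (intro allI ballI, simp only: forces.simps, intro impI allI)
    fix V x y
    assume h: "\<forall>y. (x, y) \<in> R \<and> forces R S V y C \<longrightarrow> (\<exists>z. (x, z) \<in> R \<and> (y, z) \<in> S \<and> forces R S V z A)"
      and y: "(x, y) \<in> R \<and> forces R S V y C"
    then obtain z where z: "(x, z) \<in> R" "(y, z) \<in> S" "forces R S V z A" by blast
    then have "forces R S V z B" using R1.IH RW by auto
    then show "\<exists>z. (x, z) \<in> R \<and> (y, z) \<in> S \<and> forces R S V z B" using z by blast
  qed
next
  case (R2 A B C)
  have RW: "(x, y) \<in> R \<Longrightarrow> y \<in> W" for x y using assms(2) unfolding simplified_frame_def by blast
  show ?case
  proof (intro allI ballI, simp only: forces.simps, intro impI allI)
    fix V x y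
    assume h: "\<forall>y. (x, y) \<in> R \<and> forces R S V y B \<longrightarrow> (\<exists>z. (x, z) \<in> R \<and> (y, z) \<in> S \<and> forces R S V z C)"
      and y: "(x, y) \<in> R \<and> forces R S V y A"
    then have "forces R S V y B" using R2.IH RW by auto
    then show "\<exists>z. (x, z) \<in> R \<and> (y, z) \<in> S \<and> forces R S V z C" using h y by blast
  qed
qed auto

lemma sound_CL:
  assumes "CL_prov A" "simplified_frame W R S" "trans S" "refl_on W S"
  shows "\<forall>V. \<forall>x\<in>W. forces R S V x A"
  using assms(1)
proof (induction A rule: CL_prov.induct)
  case (taut A) then show ?case by (simp add: taut_forces)
next
  case (L A) then show ?case using assms lob_sound unfolding simplified_frame_def
    by (metis forces.simps(4))
next
  case (J1 A B)
  show ?case using assms(2,4) unfolding simplified_frame_def refl_on_def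
    by (simp, meson SigmaD2 subsetD)
next
  case (J2 A B C)
  show ?case using assms(3) by simp (meson transD)
next
  case (J3 A C B) then show ?case by auto
next
  case (J4 A B) then show ?case by (auto simp: Dia_def Neg_def)
next
  case (Nec A) then show ?case using assms(2) unfolding simplified_frame_def by auto
qed auto

lemma soundness:
  assumes "prov L A" "L_frame L W R S"
  shows "valid_in W R S A"
proof (cases L)
  case IL_J2plus then show ?thesis using assms unfolding valid_in_def
    by (intro sound_IL) auto
next
  case CL then show ?thesis using assms unfolding valid_in_def
    by (intro sound_CL) auto
qed

lemma forces_iso:
  assumes RR: "\<And>a b. a \<in> W \<Longrightarrow> b \<in> W \<Longrightarrow> (f a, f b) \<in> R' \<longleftrightarrow> (a, b) \<in> R"
    and RW: "\<And>a b. (a, b) \<in> R \<Longrightarrow> b \<in> W"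
    and RS: "\<And>a n. a \<in> W \<Longrightarrow> (f a, n) \<in> R' \<Longrightarrow> \<exists>b\<in>W. n = f b"
    and SS: "\<And>a b. a \<in> W \<Longrightarrow> b \<in> W \<Longrightarrow> (f a, f b) \<in> S' \<longleftrightarrow> (a, b) \<in> S"
    and VV: "\<And>p a. a \<in> W \<Longrightarrow> V' p (f a) = V p a"
    and x: "x \<in> W"
  shows "forces R' S' V' (f x) A = forces R S V x A"
  using x
proof (induction A arbitrary: x)
  case (Box A)
  show ?case
  proof
    assume L: "forces R' S' V' (f x) (Box A)"
    show "forces R S V x (Box A)"
    proof (simp only: forces.simps, intro allI impI)
      fix y assume y: "(x,y)\<in>R"
      then have "(f x, f y) \<in> R'" using RR RW Box.prems by blast
      with L have "forces R' S' V' (f y) A" by simp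
      then show "forces R S V y A" using Box.IH RW y by blast
    qed
  next
    assume L: "forces R S V x (Box A)"
    show "forces R' S' V' (f x) (Box A)"
    proof (simp only: forces.simps, intro allI impI)
      fix n assume "(f x, n) \<in> R'"
      then obtain y where y: "y \<in> W" "n = f y" using RS Box.prems by blast
      then have "(x, y) \<in> R" using RR Box.prems \<open>(f x, n) \<in> R'\<close> by blast
      then show "forces R' S' V' n A" using L Box.IH y by simp
    qed
  qed
next
  case (Rhd A B)
  show ?case
  proof
    assume L: "forces R' S' V' (f x) (Rhd A B)"
    show "forces R S V x (Rhd A B)"
    proof (simp only: forces.simps, intro allI impI)
      fix y assume y: "(x,y)\<in>R \<and> forces R S V y A"
      then have a: "(f x, f y) \<in> R'" using RR RW Rhd.prems by blast
      have yW: "y \<in> W" using y RW by blast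
      have b: "forces R' S' V' (f y) A" using y Rhd.IH yW by blast
      obtain n where n: "(f x, n) \<in> R'" "(f y, n) \<in> S'" "forces R' S' V' n B"
        using L a b by auto
      then obtain z where z: "z \<in> W" "n = f z" using RS Rhd.prems by blast
      have "(x, z) \<in> R" using RR Rhd.prems n z by blast
      moreover have "(y, z) \<in> S" using SS yW n z by blast
      moreover have "forces R S V z B" using n z Rhd.IH by blast
      ultimately show "\<exists>z. (x, z) \<in> R \<and> (y, z) \<in> S \<and> forces R S V z B" by blast
    qed
  next
    assume L: "forces R S V x (Rhd A B)"
    show "forces R' S' V' (f x) (Rhd A B)"
    proof (simp only: forces.simps, intro allI impI)
      fix n assume n: "(f x, n) \<in> R' \<and> forces R' S' V' n A"
      then obtain y where y: "y \<in> W" "n = f y" using RS Rhd.prems by blast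
      then have xy: "(x, y) \<in> R" using RR Rhd.prems n by blast
      have "forces R S V y A" using n y Rhd.IH by blast
      then obtain z where z: "(x, z) \<in> R" "(y, z) \<in> S" "forces R S V z B" using L xy by auto
      have zW: "z \<in> W" using z RW by blast
      have "(f x, f z) \<in> R'" using RR Rhd.prems zW z by blast
      moreover have "(f y, f z) \<in> S'" using SS y zW z by blast
      moreover have "forces R' S' V' (f z) B" using z zW Rhd.IH by blast
      ultimately show "\<exists>m. (f x, m) \<in> R' \<and> (n, m) \<in> S' \<and> forces R' S' V' m B"
        using y by blast
    qed
  qed
qed (auto simp: VV)


lemma to_nat:
  fixes W :: "'a set"
  assumes fr: "L_frame L W R S" and fin: "finite W" and x: "x \<in> W" and nf: "\<not> forces R S V x A"
  shows "\<not> valid_finite_frames L TYPE(nat) A"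
proof -
  obtain f :: "'a \<Rightarrow> nat" and n where f: "f ` W = {i. i < n}" "inj_on f W"
    using finite_imp_inj_to_nat_seg[OF fin] by blast
  have sf: "simplified_frame W R S" using fr by (cases L) auto
  then have RW: "R \<subseteq> W \<times> W" and SW: "S \<subseteq> W \<times> W" and trR: "trans R" and wfR: "wf (R\<inverse>)"
    and ne: "W \<noteq> {}"
    unfolding simplified_frame_def by auto
  define R' where "R' = map_prod f f ` R"
  define S' where "S' = map_prod f f ` S"
  define V' where "V' = (\<lambda>p m. V p (the_inv_into W f m))"
  have injD: "a = b" if "a \<in> W" "b \<in> W" "f a = f b" for a b using f(2) that unfolding inj_on_def by blast
  have RR: "(f a, f b) \<in> R' \<longleftrightarrow> (a, b) \<in> R" if "a \<in> W" "b \<in> W" for a b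
  proof
    assume "(f a, f b) \<in> R'"
    then obtain c d where "(c, d) \<in> R" "f c = f a" "f d = f b" unfolding R'_def by auto
    then show "(a, b) \<in> R" using injD RW that by (metis SigmaD1 SigmaD2 subsetD)
  qed (auto simp: R'_def)
  have SS: "(f a, f b) \<in> S' \<longleftrightarrow> (a, b) \<in> S" if "a \<in> W" "b \<in> W" for a b
  proof
    assume "(f a, f b) \<in> S'"
    then obtain c d where "(c, d) \<in> S" "f c = f a" "f d = f b" unfolding S'_def by auto
    then show "(a, b) \<in> S" using injD SW that by (metis SigmaD1 SigmaD2 subsetD)
  qed (auto simp: S'_def)
  have RS: "\<exists>b\<in>W. m = f b" if "(f a, m) \<in> R'" for a m
    using that RW unfolding R'_def by auto
  have VV: "V' p (f a) = V p a" if "a \<in> W" for p a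
    using f(2) that by (simp add: V'_def the_inv_into_f_f)
  have iso: "forces R' S' V' (f x) A = forces R S V x A"
    by (rule forces_iso[where W=W]) (use RR RS SS VV RW x in auto)
  have R'W: "R' \<subseteq> f ` W \<times> f ` W" using RW unfolding R'_def by auto
  have S'W: "S' \<subseteq> f ` W \<times> f ` W" using SW unfolding S'_def by auto
  have trR': "trans R'"
  proof (rule transI)
    fix a b c assume "(a, b) \<in> R'" "(b, c) \<in> R'"
    then obtain a0 b0 b1 c0 where "(a0,b0) \<in> R" "(b1,c0) \<in> R" "a = f a0" "b = f b0" "b = f b1" "c = f c0"
      unfolding R'_def by auto
    moreover then have "b0 = b1" using injD RW by blast
    ultimately show "(a, c) \<in> R'" using trR unfolding R'_def trans_def by blast
  qed
  have wfR': "wf (R'\<inverse>)"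
  proof -
    have "R'\<inverse> = map_prod f f ` (R\<inverse>)" unfolding R'_def by auto
    moreover have "wf (map_prod f f ` (R\<inverse>))"
      by (rule wf_map_prod_image_Dom_Ran[OF wfR]) (use injD RW in blast)
    ultimately show ?thesis by simp
  qed
  have trS: "trans S'" if "trans S"
  proof (rule transI)
    fix a b c assume "(a, b) \<in> S'" "(b, c) \<in> S'"
    then obtain a0 b0 b1 c0 where "(a0,b0) \<in> S" "(b1,c0) \<in> S" "a = f a0" "b = f b0" "b = f b1" "c = f c0"
      unfolding S'_def by auto
    moreover then have "b0 = b1" using injD SW by blast
    ultimately show "(a, c) \<in> S'" using that unfolding S'_def trans_def by blast
  qed
  have rfS: "refl_on (f ` W) S'" if "refl_on W S"
    using that S'W unfolding refl_on_def S'_def by auto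
  have sf': "simplified_frame (f ` W) R' S'"
    unfolding simplified_frame_def using ne R'W S'W trR' wfR' by auto
  have fr': "L_frame L (f ` W) R' S'"
    using fr sf' trS rfS by (cases L) auto
  moreover have "finite (f ` W)" using fin by simp
  moreover have "\<not> forces R' S' V' (f x) A" using iso nf by simp
  ultimately show ?thesis unfolding valid_finite_frames_def valid_in_def using x by blast
qed



lemma p_taut: "tautology A \<Longrightarrow> prov L A"
  by (cases L) (auto intro: ILJ2_prov.taut CL_prov.taut)
lemma p_mp: "prov L (Imp A B) \<Longrightarrow> prov L A \<Longrightarrow> prov L B"
  by (cases L) (auto intro: ILJ2_prov.MP CL_prov.MP)
lemma p_nec: "prov L A \<Longrightarrow> prov L (Box A)"
  by (cases L) (auto intro: ILJ2_prov.Nec CL_prov.Nec)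
lemma p_K: "prov L (Imp (Box (Imp A B)) (Imp (Box A) (Box B)))"
  by (cases L) (auto intro: ILJ2_prov.K CL_prov.K)
lemma p_L: "prov L (Imp (Box (Imp (Box A) A)) (Box A))"
  by (cases L) (auto intro: ILJ2_prov.L CL_prov.L)

lemma p_t1: "prov L A \<Longrightarrow> tautology (Imp A B) \<Longrightarrow> prov L B"
  using p_mp p_taut by blast
lemma p_t2: "prov L A \<Longrightarrow> prov L B \<Longrightarrow> tautology (Imp A (Imp B C)) \<Longrightarrow> prov L C"
  using p_mp p_taut by blast
lemma p_t3: "prov L A \<Longrightarrow> prov L B \<Longrightarrow> prov L C \<Longrightarrow> tautology (Imp A (Imp B (Imp C D))) \<Longrightarrow> prov L D"
  using p_mp p_taut by blast
lemma p_t4: "prov L A \<Longrightarrow> prov L B \<Longrightarrow> prov L C \<Longrightarrow> prov L D \<Longrightarrow> tautology (Imp A (Imp B (Imp C (Imp D E)))) \<Longrightarrow> prov L E"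
  using p_mp p_taut by blast

lemma p_mono_box: "prov L (Imp A B) \<Longrightarrow> prov L (Imp (Box A) (Box B))"
  using p_mp p_nec p_K by blast

lemma p_box_and: "prov L (Imp (Box A) (Imp (Box B) (Box (And A B))))"
proof -
  have "prov L (Imp (Box A) (Box (Imp B (And A B))))"
    by (rule p_mono_box, rule p_taut) (simp add: tautology_def)
  moreover have "prov L (Imp (Box (Imp B (And A B))) (Imp (Box B) (Box (And A B))))" by (rule p_K)
  ultimately show ?thesis by (rule p_t2) (simp add: tautology_def)
qed

lemma p_four: "prov L (Imp (Box A) (Box (Box A)))"
proof -
  let ?B = "And A (Box A)"
  have 1: "prov L (Imp (Box ?B) (Box A))" by (rule p_mono_box, rule p_taut) (simp add: tautology_def)
  have 2: "prov L (Imp (Box ?B) (Box (Box A)))" by (rule p_mono_box, rule p_taut) (simp add: tautology_def)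
  have 3: "prov L (Imp A (Imp (Box ?B) ?B))" using 1 by (rule p_t1) (simp add: tautology_def)
  have 4: "prov L (Imp (Box A) (Box (Imp (Box ?B) ?B)))" using 3 by (rule p_mono_box)
  show ?thesis using 4 p_L[of L ?B] 2 by (rule p_t3) (simp add: tautology_def)
qed

section \<open>Interpretability principles\<close>

abbreviation "IL \<equiv> IL_J2plus"

lemma il_R1: "prov IL (Imp A B) \<Longrightarrow> prov IL (Imp (Rhd C A) (Rhd C B))" by (simp add: ILJ2_prov.R1)
lemma il_R2: "prov IL (Imp A B) \<Longrightarrow> prov IL (Imp (Rhd B C) (Rhd A C))" by (simp add: ILJ2_prov.R2)
lemma il_J4m: "prov IL (Iff (Box (Neg A)) (Rhd A Bot))" by (simp add: ILJ2_prov.J4m)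
lemma il_J2p: "prov IL (Imp (And (Rhd A (Or B C)) (Rhd B C)) (Rhd A C))" by (simp add: ILJ2_prov.J2plus)
lemma p_J3: "prov L (Imp (And (Rhd A C) (Rhd B C)) (Rhd (Or A B) C))"
  by (cases L) (auto intro: ILJ2_prov.J3 CL_prov.J3)

lemma il_box_rhd: "prov IL (Imp (Box (Neg F)) (Rhd F G))"
proof -
  have "prov IL (Imp (Rhd F Bot) (Rhd F G))" by (rule il_R1, rule p_taut) (simp add: tautology_def)
  then show ?thesis using il_J4m[of F] by (rule p_t2) (simp add: tautology_def Iff_def)
qed


lemma cl_J1: "prov CL (Imp (Box (Imp A B)) (Rhd A B))" by (simp add: CL_prov.J1)
lemma cl_J2: "prov CL (Imp (And (Rhd A B) (Rhd B C)) (Rhd A C))" by (simp add: CL_prov.J2)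
lemma cl_J4: "prov CL (Imp (Rhd A B) (Imp (Dia A) (Dia B)))" by (simp add: CL_prov.J4)

lemma cl_imp_rhd: "prov CL (Imp A B) \<Longrightarrow> prov CL (Rhd A B)"
  using p_nec cl_J1 p_mp by blast

lemma p_rbot: "prov L (Rhd Bot E)"
proof (cases L)
  case IL_J2plus
  have "prov IL (Box (Neg Bot))" by (rule p_nec, rule p_taut) (simp add: tautology_def Neg_def)
  then show ?thesis using il_box_rhd IL_J2plus p_mp by blast
next
  case CL
  show ?thesis unfolding CL by (rule cl_imp_rhd, rule p_taut) (simp add: tautology_def)
qed

lemma p_q: "prov L (Rhd (if L = CL then B else Bot) B)"
proof (cases L)
  case IL_J2plus then show ?thesis using p_rbot by simp
next
  case CL
  have "prov CL (Rhd B B)" by (rule cl_imp_rhd, rule p_taut) (simp add: tautology_def)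
  then show ?thesis using CL by simp
qed

lemma p_boximp_il: "prov IL (Imp (Box (Imp B X)) (Imp (Rhd A B) (Rhd A X)))"
proof -
  let ?N = "And B (Neg X)"
  have 1: "prov IL (Imp (Box (Imp B X)) (Box (Neg ?N)))"
    by (rule p_mono_box, rule p_taut) (simp add: tautology_def Neg_def)
  have 2: "prov IL (Imp (Box (Neg ?N)) (Rhd ?N X))" by (rule il_box_rhd)
  have 3: "prov IL (Imp (Rhd A B) (Rhd A (Or ?N X)))"
    by (rule il_R1, rule p_taut) (simp add: tautology_def Neg_def)
  have 4: "prov IL (Imp (And (Rhd A (Or ?N X)) (Rhd ?N X)) (Rhd A X))" by (rule il_J2p)
  show ?thesis using 1 2 3 4 by (rule p_t4) (simp add: tautology_def)
qed

lemma p_boximpL: "prov L (Imp (Box (Imp A X)) (Imp (Rhd X B) (Rhd A B)))"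
proof (cases L)
  case IL_J2plus
  let ?N = "And A (Neg X)"
  have 1: "prov IL (Imp (Box (Imp A X)) (Box (Neg ?N)))"
    by (rule p_mono_box, rule p_taut) (simp add: tautology_def Neg_def)
  have 2: "prov IL (Imp (Box (Neg ?N)) (Rhd ?N B))" by (rule il_box_rhd)
  have 3: "prov IL (Imp (Rhd X B) (Rhd (And A X) B))"
    by (rule il_R2, rule p_taut) (simp add: tautology_def)
  have 4: "prov IL (Imp (And (Rhd ?N B) (Rhd (And A X) B)) (Rhd (Or ?N (And A X)) B))" by (rule p_J3)
  have 5: "prov IL (Imp (Rhd (Or ?N (And A X)) B) (Rhd A B))"
    by (rule il_R2, rule p_taut) (simp add: tautology_def Neg_def)
  have "prov IL (Imp (Box (Imp A X)) (Rhd ?N B))" using 1 2 by (rule p_t2) (simp add: tautology_def)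
  then show ?thesis unfolding IL_J2plus using 3 4 5 by (rule p_t4) (simp add: tautology_def)
next
  case CL
  show ?thesis unfolding CL using cl_J1[of A X] cl_J2[of A X B] by (rule p_t2) (simp add: tautology_def)
qed

lemma p_fwd: "prov L (Imp (Box (Imp B (Or D E))) (Imp (Rhd A B) (Imp (Rhd D E) (Rhd A E))))"
proof (cases L)
  case IL_J2plus
  show ?thesis unfolding IL_J2plus using p_boximp_il[of B "Or D E" A] il_J2p[of A D E]
    by (rule p_t2) (simp add: tautology_def)
next
  case CL
  have 1: "prov CL (Rhd E E)" by (rule cl_imp_rhd, rule p_taut) (simp add: tautology_def)
  have 2: "prov CL (Imp (Rhd D E) (Rhd (Or D E) E))" using 1 p_J3[of CL D E E]
    by (rule p_t2) (simp add: tautology_def)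
  have 3: "prov CL (Imp (Box (Imp B (Or D E))) (Rhd B (Or D E)))" by (rule cl_J1)
  show ?thesis unfolding CL using 2 3 cl_J2[of B "Or D E" E] cl_J2[of A B E]
    by (rule p_t4) (simp add: tautology_def)
qed

lemma p_rhdbot: "prov L (Imp (Rhd A Bot) (Box (Imp A (Or Bot Bot))))"
proof (cases L)
  case IL_J2plus
  have "prov IL (Imp (Box (Neg A)) (Box (Imp A (Or Bot Bot))))"
    by (rule p_mono_box, rule p_taut) (simp add: tautology_def Neg_def)
  then show ?thesis unfolding IL_J2plus using il_J4m[of A] by (rule p_t2) (simp add: tautology_def Iff_def)
next
  case CL
  have 1: "prov CL (Box (Neg Bot))" by (rule p_nec, rule p_taut) (simp add: tautology_def Neg_def)
  have 2: "prov CL (Imp (Box (Neg A)) (Box (Imp A (Or Bot Bot))))"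
    by (rule p_mono_box, rule p_taut) (simp add: tautology_def Neg_def)
  show ?thesis unfolding CL using 1 2 cl_J4[of A Bot] by (rule p_t3) (simp add: tautology_def Dia_def Neg_def)
qed



fun subfm :: "fm \<Rightarrow> fm list" where
  "subfm (Var p) = [Var p]"
| "subfm Top = [Top]"
| "subfm Bot = [Bot]"
| "subfm (Imp A B) = Imp A B # subfm A @ subfm B"
| "subfm (Or A B) = Or A B # subfm A @ subfm B"
| "subfm (And A B) = And A B # subfm A @ subfm B"
| "subfm (Box A) = Box A # subfm A"
| "subfm (Rhd A B) = Rhd A B # subfm A @ subfm B"

lemma subfm_self: "F \<in> set (subfm F)"
  by (cases F) auto

lemma subfm_trans: "G \<in> set (subfm F) \<Longrightarrow> set (subfm G) \<subseteq> set (subfm F)"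
  by (induction F) auto

definition disj :: "fm list \<Rightarrow> fm" where "disj xs = foldr Or xs Bot"
definition conjl :: "fm list \<Rightarrow> fm" where "conjl xs = foldr And xs Top"

lemma disj_simps[simp]: "disj [] = Bot" "disj (x # xs) = Or x (disj xs)"
  by (simp_all add: disj_def)
lemma conjl_simps[simp]: "conjl [] = Top" "conjl (x # xs) = And x (conjl xs)"
  by (simp_all add: conjl_def)

fun bf :: "fm \<Rightarrow> fm" where
  "bf (Box C) = And (Box C) C"
| "bf _ = Top"

lemma conjl_imp: "F \<in> set xs \<Longrightarrow> prov L (Imp (conjl xs) F)"
proof (induction xs)
  case (Cons G ys)
  show ?case
  proof (cases "F = G")
    case True then show ?thesis by (simp add: p_taut tautology_def)
  next
    case False
    then have "prov L (Imp (conjl ys) F)" using Cons by simp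
    then show ?thesis by (rule p_t1) (simp add: tautology_def)
  qed
qed simp

lemma cons_mono: "\<not> prov L (Neg A) \<Longrightarrow> prov L (Imp A B) \<Longrightarrow> \<not> prov L (Neg B)"
  using p_t2[of L "Imp A B" "Neg B" "Neg A"] by (auto simp: tautology_def Neg_def)

locale cm =
  fixes L :: logic and phis ps :: "fm list"
  assumes dist: "distinct ps"
  and phis_ps: "set phis \<subseteq> set ps"
  and ps_closed: "F \<in> set ps \<Longrightarrow> set (subfm F) \<subseteq> set ps"
  and bot_phis: "Bot \<in> set phis"
  and phis_closed: "F \<in> set phis \<Longrightarrow> set (subfm F) \<subseteq> set phis"
  and extra: "P \<in> set phis \<Longrightarrow> Q \<in> set phis \<Longrightarrow> Box (Imp P (Or (disj (filter f phis)) Q)) \<in> set ps"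
begin

definition lt :: "fm set \<Rightarrow> fm \<Rightarrow> fm" where "lt S F = (if F \<in> S then F else Neg F)"
definition cnj :: "fm set \<Rightarrow> fm" where "cnj S = conjl (map (lt S) ps)"
definition der :: "fm set \<Rightarrow> fm \<Rightarrow> bool" where "der S F = prov L (Imp (cnj S) F)"
definition cns :: "fm \<Rightarrow> bool" where "cns F = (\<not> prov L (Neg F))"
definition at :: "fm set \<Rightarrow> bool" where "at S = (S \<subseteq> set ps \<and> cns (cnj S))"

lemma sub_ps: "F \<in> set ps \<Longrightarrow> G \<in> set (subfm F) \<Longrightarrow> G \<in> set ps"
  using ps_closed by blast

lemma cnj_lt: "F \<in> set ps \<Longrightarrow> prov L (Imp (cnj S) (lt S F))"
  unfolding cnj_def by (rule conjl_imp) simp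

lemma der_prov: "prov L A \<Longrightarrow> der S A"
  unfolding der_def using p_t1[of L A "Imp (cnj S) A"] by (simp add: tautology_def)

lemma der_mp: "der S A \<Longrightarrow> prov L (Imp A B) \<Longrightarrow> der S B"
  unfolding der_def using p_t2[of L "Imp (cnj S) A" "Imp A B" "Imp (cnj S) B"] by (simp add: tautology_def)

lemma der_mp2: "der S A \<Longrightarrow> der S B \<Longrightarrow> prov L (Imp A (Imp B C)) \<Longrightarrow> der S C"
  unfolding der_def using p_t3[of L "Imp (cnj S) A" "Imp (cnj S) B" "Imp A (Imp B C)" "Imp (cnj S) C"]
  by (simp add: tautology_def)

lemma der_t: "der S A \<Longrightarrow> tautology (Imp A B) \<Longrightarrow> der S B"
  using der_mp p_taut by blast

lemma der_t2: "der S A \<Longrightarrow> der S B \<Longrightarrow> tautology (Imp A (Imp B C)) \<Longrightarrow> der S C"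
  using der_mp2 p_taut by blast

lemma der_bot: "at S \<Longrightarrow> \<not> der S Bot"
  unfolding at_def cns_def der_def Neg_def by simp

lemma mem_der: "F \<in> S \<Longrightarrow> F \<in> set ps \<Longrightarrow> der S F"
  using cnj_lt[of F S] unfolding der_def lt_def by simp

lemma nmem_der: "F \<notin> S \<Longrightarrow> F \<in> set ps \<Longrightarrow> der S (Neg F)"
  using cnj_lt[of F S] unfolding der_def lt_def by simp

lemma der_mem: "at S \<Longrightarrow> F \<in> set ps \<Longrightarrow> der S F \<longleftrightarrow> F \<in> S"
proof
  assume a: "at S" "F \<in> set ps" "der S F"
  show "F \<in> S"
  proof (rule ccontr)
    assume "F \<notin> S"
    then have "der S (Neg F)" using nmem_der a by blast
    then have "der S Bot" using a(3) by (rule der_t2) (simp add: tautology_def Neg_def)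
    then show False using der_bot a by blast
  qed
qed (rule mem_der)

lemma bot_nmem: "at S \<Longrightarrow> Bot \<notin> S"
  using mem_der der_bot phis_ps bot_phis by blast

lemma imp_mem: assumes "at S" "Imp A B \<in> set ps"
  shows "Imp A B \<in> S \<longleftrightarrow> (A \<in> S \<longrightarrow> B \<in> S)"
proof -
  have ps: "A \<in> set ps" "B \<in> set ps" using assms(2) sub_ps[of "Imp A B"] subfm_self[of A] subfm_self[of B] by auto
  show ?thesis
  proof
    assume h: "Imp A B \<in> S"
    show "A \<in> S \<longrightarrow> B \<in> S"
    proof
      assume "A \<in> S"
      then have "der S A" "der S (Imp A B)" using h mem_der ps assms by blast+
      then have "der S B" by (rule der_t2) (simp add: tautology_def)
      then show "B \<in> S" using der_mem assms ps by blast
    qed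
  next
    assume h: "A \<in> S \<longrightarrow> B \<in> S"
    show "Imp A B \<in> S"
    proof (cases "A \<in> S")
      case True
      then have "der S B" using h mem_der ps by blast
      then have "der S (Imp A B)" by (rule der_t) (simp add: tautology_def)
      then show ?thesis using der_mem assms by blast
    next
      case False
      then have "der S (Neg A)" using nmem_der ps by blast
      then have "der S (Imp A B)" by (rule der_t) (simp add: tautology_def Neg_def)
      then show ?thesis using der_mem assms by blast
    qed
  qed
qed

lemma and_mem: assumes "at S" "And A B \<in> set ps"
  shows "And A B \<in> S \<longleftrightarrow> (A \<in> S \<and> B \<in> S)"
proof -
  have ps: "A \<in> set ps" "B \<in> set ps" using assms(2) sub_ps[of "And A B"] subfm_self[of A] subfm_self[of B] by auto
  show ?thesis
  proof
    assume "And A B \<in> S"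
    then have "der S (And A B)" using mem_der assms by blast
    then have "der S A" "der S B" by (auto elim!: der_t simp: tautology_def)
    then show "A \<in> S \<and> B \<in> S" using der_mem assms ps by blast
  next
    assume "A \<in> S \<and> B \<in> S"
    then have "der S A" "der S B" using mem_der ps by blast+
    then have "der S (And A B)" by (rule der_t2) (simp add: tautology_def)
    then show "And A B \<in> S" using der_mem assms by blast
  qed
qed

lemma or_mem: assumes "at S" "Or A B \<in> set ps"
  shows "Or A B \<in> S \<longleftrightarrow> (A \<in> S \<or> B \<in> S)"
proof -
  have ps: "A \<in> set ps" "B \<in> set ps" using assms(2) sub_ps[of "Or A B"] subfm_self[of A] subfm_self[of B] by auto
  show ?thesis
  proof
    assume h: "Or A B \<in> S"
    show "A \<in> S \<or> B \<in> S"
    proof (rule ccontr)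
      assume "\<not> (A \<in> S \<or> B \<in> S)"
      then have nA: "der S (Neg A)" and "der S (Neg B)" using nmem_der ps by blast+
      have "der S (Or A B)" using h mem_der assms by blast
      with nA have "der S B" by (rule der_t2) (simp add: tautology_def Neg_def)
      then have "der S Bot" using \<open>der S (Neg B)\<close> by (rule der_t2) (simp add: tautology_def Neg_def)
      then show False using der_bot assms by blast
    qed
  next
    assume "A \<in> S \<or> B \<in> S"
    then have "der S A \<or> der S B" using mem_der ps by blast
    then have "der S (Or A B)" by (auto elim!: der_t simp: tautology_def)
    then show "Or A B \<in> S" using der_mem assms by blast
  qed
qed

lemma top_mem: "at S \<Longrightarrow> Top \<in> set ps \<Longrightarrow> Top \<in> S"
proof -
  assume "at S" "Top \<in> set ps"
  moreover have "der S Top" by (rule der_prov, rule p_taut) (simp add: tautology_def)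
  ultimately show "Top \<in> S" using der_mem by blast
qed

end



context cm begin

lemma lind_aux:
  "distinct xs \<Longrightarrow> \<not> prov L (Neg X) \<Longrightarrow> \<exists>S. S \<subseteq> set xs \<and> \<not> prov L (Neg (And X (conjl (map (lt S) xs))))"
proof (induction xs arbitrary: X)
  case Nil
  have "\<not> prov L (Neg (And X Top))"
    using cons_mono[OF Nil(2), of "And X Top"] by (auto simp: p_taut tautology_def)
  then show ?case by auto
next
  case (Cons F xs)
  have "\<not> prov L (Neg (And X F)) \<or> \<not> prov L (Neg (And X (Neg F)))"
  proof (rule ccontr)
    assume "\<not> ?thesis"
    then have "prov L (Neg (And X F))" "prov L (Neg (And X (Neg F)))" by auto
    then have "prov L (Neg X)" by (rule p_t2) (auto simp: tautology_def Neg_def)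
    then show False using Cons by blast
  qed
  then show ?case
  proof
    assume c: "\<not> prov L (Neg (And X F))"
    obtain S where S: "S \<subseteq> set xs" "\<not> prov L (Neg (And (And X F) (conjl (map (lt S) xs))))"
      using Cons.IH[OF _ c] Cons.prems by auto
    have Fn: "F \<notin> set xs" using Cons.prems by simp
    have m: "map (lt (insert F S)) xs = map (lt S) xs"
      using Fn unfolding lt_def by (auto intro!: map_cong)
    have "\<not> prov L (Neg (And X (conjl (map (lt (insert F S)) (F # xs)))))"
      using cons_mono[OF S(2)] by (simp add: m lt_def p_taut tautology_def)
    then show ?thesis using S by (intro exI[of _ "insert F S"]) auto
  next
    assume c: "\<not> prov L (Neg (And X (Neg F)))"
    obtain S where S: "S \<subseteq> set xs" "\<not> prov L (Neg (And (And X (Neg F)) (conjl (map (lt S) xs))))"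
      using Cons.IH[OF _ c] Cons.prems by auto
    have Fn: "F \<notin> S" using Cons.prems S by auto
    have "\<not> prov L (Neg (And X (conjl (map (lt S) (F # xs)))))"
      using cons_mono[OF S(2)] Fn by (simp add: lt_def p_taut tautology_def)
    then show ?thesis using S by (intro exI[of _ S]) auto
  qed
qed

lemma lind: "cns X \<Longrightarrow> \<exists>S. at S \<and> cns (And X (cnj S))"
proof -
  assume "cns X"
  then obtain S where S: "S \<subseteq> set ps" "cns (And X (cnj S))"
    using lind_aux[OF dist] unfolding cns_def cnj_def by blast
  have "cns (cnj S)" using S(2) unfolding cns_def
    by (rule cons_mono) (auto simp: p_taut tautology_def)
  then show ?thesis using S unfolding at_def by blast
qed

lemma lind_mem: "cns (And X (cnj S)) \<Longrightarrow> F \<in> set ps \<Longrightarrow> prov L (Imp X F) \<Longrightarrow> F \<in> S"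
proof (rule ccontr)
  assume a: "cns (And X (cnj S))" "F \<in> set ps" "prov L (Imp X F)" "F \<notin> S"
  then have "der S (Neg F)" using nmem_der by blast
  then have "prov L (Neg (And X (cnj S)))" using a(3) unfolding der_def
    by (rule p_t2) (auto simp: tautology_def Neg_def)
  then show False using a unfolding cns_def by blast
qed

lemma lind_nmem: "cns (And X (cnj S)) \<Longrightarrow> F \<in> set ps \<Longrightarrow> prov L (Imp X (Neg F)) \<Longrightarrow> F \<notin> S"
proof
  assume a: "cns (And X (cnj S))" "F \<in> set ps" "prov L (Imp X (Neg F))" "F \<in> S"
  then have "der S F" using mem_der by blast
  then have "prov L (Neg (And X (cnj S)))" using a(3) unfolding der_def
    by (rule p_t2) (auto simp: tautology_def Neg_def)
  then show False using a unfolding cns_def by blast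
qed

definition prec :: "fm set \<Rightarrow> fm set \<Rightarrow> bool" where
  "prec G D = ((\<forall>C. Box C \<in> G \<longrightarrow> Box C \<in> D \<and> C \<in> D) \<and> (\<exists>C. Box C \<in> D \<and> Box C \<notin> G))"

lemma prec_trans: "prec G D \<Longrightarrow> prec D D' \<Longrightarrow> prec G D'"
  unfolding prec_def by blast

lemma prec_irrefl: "\<not> prec G G"
  unfolding prec_def by blast

lemma box_conjl: "(\<forall>F\<in>set xs. der S (Box F)) \<Longrightarrow> der S (Box (conjl xs))"
proof (induction xs)
  case Nil
  show ?case by (simp, rule der_prov, rule p_nec, rule p_taut) (auto simp: tautology_def)
next
  case (Cons F xs)
  then have a: "der S (Box F)" and b: "der S (Box (conjl xs))" by auto
  show ?case using der_mp2[OF a b p_box_and] by simp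
qed

lemma der_box_bf: assumes "at G" "H \<in> G" shows "der G (Box (bf H))"
proof (cases "\<exists>C. H = Box C")
  case True
  then obtain C where C: "H = Box C" by blast
  have "der G (Box C)" using assms C mem_der unfolding at_def by blast
  moreover then have "der G (Box (Box C))" using p_four der_mp by blast
  ultimately have "der G (Box (And (Box C) C))" using p_box_and der_mp2 by blast
  then show ?thesis using C by simp
next
  case False
  then have "bf H = Top" by (cases H) auto
  then show ?thesis by (simp, intro der_prov p_nec p_taut) (auto simp: tautology_def)
qed

lemma succ:
  assumes G: "at G" and Z: "Box Z \<in> set ps" and nd: "\<not> der G (Box Z)"
  shows "\<exists>D. at D \<and> prec G D \<and> Z \<notin> D"
proof -
  define bl where "bl = filter (\<lambda>F. F \<in> G) ps"
  define bx where "bx = conjl (map bf bl)"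
  have dbx: "der G (Box bx)" unfolding bx_def
    by (rule box_conjl) (auto simp: bl_def intro: der_box_bf[OF G])
  define X where "X = And bx (And (Neg Z) (Box Z))"
  have cX: "cns X"
  proof (unfold cns_def, rule notI)
    assume "prov L (Neg X)"
    then have "prov L (Imp bx (Imp (Box Z) Z))" unfolding X_def
      by (rule p_t1) (auto simp: tautology_def Neg_def)
    then have "prov L (Imp (Box bx) (Box (Imp (Box Z) Z)))" by (rule p_mono_box)
    then have "der G (Box (Imp (Box Z) Z))" by (rule der_mp[OF dbx])
    then have "der G (Box Z)" using p_L by (rule der_mp)
    then show False using nd by blast
  qed
  obtain D where D: "at D" "cns (And X (cnj D))" using lind[OF cX] by blast
  have Zps: "Z \<in> set ps" using Z sub_ps[of "Box Z"] subfm_self[of Z] by auto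
  have "prec G D" unfolding prec_def
  proof (rule conjI, intro allI impI)
    fix C assume C: "Box C \<in> G"
    then have Cps: "Box C \<in> set ps" "C \<in> set ps" using G sub_ps[of "Box C"] subfm_self[of C]
      unfolding at_def by auto
    have "Box C \<in> set bl" using C Cps unfolding bl_def by auto
    then have "bf (Box C) \<in> set (map bf bl)" unfolding set_map by (rule imageI)
    then have "prov L (Imp bx (And (Box C) C))" unfolding bx_def by (simp add: conjl_imp)
    then have i1: "prov L (Imp X (Box C))" unfolding X_def
      by (rule p_t1) (auto simp: tautology_def)
    have i2: "prov L (Imp X C)" using \<open>prov L (Imp bx (And (Box C) C))\<close> unfolding X_def
      by (rule p_t1) (auto simp: tautology_def)
    show "Box C \<in> D \<and> C \<in> D" using lind_mem[OF D(2) Cps(1) i1] lind_mem[OF D(2) Cps(2) i2] by blast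
  next
    have "prov L (Imp X (Box Z))" unfolding X_def by (rule p_taut) (auto simp: tautology_def)
    then have "Box Z \<in> D" using lind_mem[OF D(2) Z] by blast
    moreover have "Box Z \<notin> G" using nd mem_der Z by blast
    ultimately show "\<exists>C. Box C \<in> D \<and> Box C \<notin> G" by blast
  qed
  moreover have "prov L (Imp X (Neg Z))" unfolding X_def by (rule p_taut) (auto simp: tautology_def)
  then have "Z \<notin> D" using lind_nmem[OF D(2) Zps] by blast
  ultimately show ?thesis using D by blast
qed

end



context cm begin

lemma dset: "der G (Rhd (disj (filter (\<lambda>A. der G (Rhd A E)) xs)) E)"
proof (induction xs)
  case Nil
  show ?case by (simp add: der_prov p_rbot)
next
  case (Cons A xs)
  show ?case
  proof (cases "der G (Rhd A E)")
    case True
    let ?d = "disj (filter (\<lambda>A. der G (Rhd A E)) xs)"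
    have p: "prov L (Imp (Rhd A E) (Imp (Rhd ?d E) (Rhd (Or A ?d) E)))"
      using p_J3[of L A E ?d] by (rule p_t1) (auto simp: tautology_def)
    have "der G (Rhd (Or A ?d) E)" using der_mp2[OF True Cons.IH p] .
    then show ?thesis using True by simp
  next
    case False then show ?thesis using Cons by simp
  qed
qed

lemma disj_mem: "at S \<Longrightarrow> disj xs \<in> set ps \<Longrightarrow> A \<in> set xs \<Longrightarrow> A \<in> S \<Longrightarrow> disj xs \<in> S"
proof (induction xs)
  case (Cons B ys)
  have ps: "B \<in> set ps" "disj ys \<in> set ps"
    using Cons.prems(2) sub_ps[of "Or B (disj ys)"] subfm_self[of B] subfm_self[of "disj ys"] by auto
  show ?case using Cons ps or_mem[of S B "disj ys"] by auto
qed simp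

lemma box_bot_ps: "A \<in> set phis \<Longrightarrow> Box (Imp A (Or Bot Bot)) \<in> set ps"
  using extra[of A Bot "\<lambda>_. False"] bot_phis by simp

lemma bot_inv:
  assumes "at G" "at D" "prec G D" "A \<in> set phis" "A \<in> D"
  shows "\<not> der G (Rhd A Bot)"
proof
  assume "der G (Rhd A Bot)"
  then have "der G (Box (Imp A (Or Bot Bot)))" using p_rhdbot der_mp by blast
  then have "Box (Imp A (Or Bot Bot)) \<in> G" using der_mem assms box_bot_ps by blast
  then have i: "Imp A (Or Bot Bot) \<in> D" using assms(3) unfolding prec_def by blast
  have ps: "Imp A (Or Bot Bot) \<in> set ps" "Or Bot Bot \<in> set ps"
    using sub_ps[OF box_bot_ps[OF assms(4)]] by auto
  have "Or Bot Bot \<in> D" using i imp_mem[OF assms(2) ps(1)] assms(5) by blast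
  then have "Bot \<in> D" using or_mem[OF assms(2) ps(2)] by blast
  then show False using bot_nmem assms(2) by blast
qed

lemma back_lemma:
  assumes G: "at G" and A: "A \<in> set phis" and B: "B \<in> set phis" and AB: "Rhd A B \<in> set phis"
    and nm: "Rhd A B \<notin> G"
  shows "\<exists>D. at D \<and> prec G D \<and> A \<in> D \<and> (L = CL \<longrightarrow> B \<notin> D) \<and>
            (\<forall>A'\<in>set phis. A' \<in> D \<longrightarrow> \<not> der G (Rhd A' B))"
proof -
  define Q where "Q = (if L = CL then B else Bot)"
  have Q: "Q \<in> set phis" using B bot_phis Q_def by simp
  define Dl where "Dl = filter (\<lambda>A'. der G (Rhd A' B)) phis"
  define Z where "Z = Imp A (Or (disj Dl) Q)"
  have Zps: "Box Z \<in> set ps" unfolding Z_def Dl_def using extra[OF A Q] by blast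
  have nd: "\<not> der G (Box Z)"
  proof
    assume h: "der G (Box Z)"
    have d1: "der G (Rhd (disj Dl) B)" unfolding Dl_def by (rule dset)
    have d2: "der G (Rhd Q B)" unfolding Q_def by (rule der_prov, rule p_q)
    have "der G (Rhd (Or (disj Dl) Q) B)" using d1 d2
      by (rule der_mp2) (rule p_t1[OF p_J3[of L "disj Dl" B Q]], auto simp: tautology_def)
    then have "der G (Rhd A B)" using h unfolding Z_def
      using der_mp2[OF h[unfolded Z_def] _ p_boximpL] by blast
    then show False using nm der_mem G AB phis_ps by blast
  qed
  obtain D where D: "at D" "prec G D" "Z \<notin> D" using succ[OF G Zps nd] by blast
  have ps: "Z \<in> set ps" "Or (disj Dl) Q \<in> set ps" "disj Dl \<in> set ps" "Q \<in> set ps"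
    using sub_ps[OF Zps] unfolding Z_def by (auto intro: subfm_self)
  have "A \<in> D" "Or (disj Dl) Q \<notin> D" using D(3) imp_mem[OF D(1)] ps unfolding Z_def by auto
  then have "disj Dl \<notin> D" "Q \<notin> D" using or_mem[OF D(1) ps(2)] by auto
  moreover have "\<forall>A'\<in>set phis. A' \<in> D \<longrightarrow> \<not> der G (Rhd A' B)"
  proof (intro ballI impI notI)
    fix A' assume "A' \<in> set phis" "A' \<in> D" "der G (Rhd A' B)"
    then have "A' \<in> set Dl" unfolding Dl_def by simp
    then have "disj Dl \<in> D" using disj_mem[OF D(1) ps(3)] \<open>A' \<in> D\<close> by blast
    then show False using \<open>disj Dl \<notin> D\<close> by blast
  qed
  ultimately show ?thesis using D \<open>A \<in> D\<close> unfolding Q_def by auto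
qed

lemma fwd_lemma:
  assumes G: "at G" and A: "A \<in> set phis" and B: "B \<in> set phis" and E: "E \<in> set phis"
    and dAB: "der G (Rhd A B)" and nAE: "\<not> der G (Rhd A E)"
  shows "\<exists>D. at D \<and> prec G D \<and> B \<in> D \<and> E \<notin> D \<and>
            (\<forall>A'\<in>set phis. A' \<in> D \<longrightarrow> \<not> der G (Rhd A' E))"
proof -
  define Dl where "Dl = filter (\<lambda>A'. der G (Rhd A' E)) phis"
  define Z where "Z = Imp B (Or (disj Dl) E)"
  have Zps: "Box Z \<in> set ps" unfolding Z_def Dl_def using extra[OF B E] by blast
  have nd: "\<not> der G (Box Z)"
  proof
    assume h: "der G (Box Z)"
    have d1: "der G (Rhd (disj Dl) E)" unfolding Dl_def by (rule dset)
    have "der G (Imp (Rhd A B) (Imp (Rhd (disj Dl) E) (Rhd A E)))"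
      using h unfolding Z_def by (rule der_mp) (rule p_fwd)
    then have "der G (Imp (Rhd (disj Dl) E) (Rhd A E))" using dAB
      by (rule der_t2) (auto simp: tautology_def)
    then have "der G (Rhd A E)" using d1 by (rule der_t2) (auto simp: tautology_def)
    then show False using nAE by blast
  qed
  obtain D where D: "at D" "prec G D" "Z \<notin> D" using succ[OF G Zps nd] by blast
  have ps: "Z \<in> set ps" "Or (disj Dl) E \<in> set ps" "disj Dl \<in> set ps" "E \<in> set ps"
    using sub_ps[OF Zps] unfolding Z_def by (auto intro: subfm_self)
  have "B \<in> D" "Or (disj Dl) E \<notin> D" using D(3) imp_mem[OF D(1)] ps unfolding Z_def by auto
  then have "disj Dl \<notin> D" "E \<notin> D" using or_mem[OF D(1) ps(2)] by auto
  moreover have "\<forall>A'\<in>set phis. A' \<in> D \<longrightarrow> \<not> der G (Rhd A' E)"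
  proof (intro ballI impI notI)
    fix A' assume "A' \<in> set phis" "A' \<in> D" "der G (Rhd A' E)"
    then have "A' \<in> set Dl" unfolding Dl_def by simp
    then have "disj Dl \<in> D" using disj_mem[OF D(1) ps(3)] \<open>A' \<in> D\<close> by blast
    then show False using \<open>disj Dl \<notin> D\<close> by blast
  qed
  ultimately show ?thesis using D \<open>B \<in> D\<close> by auto
qed

end



context cm begin

definition Wc :: "(fm set \<times> fm set \<times> fm) set" where
  "Wc = {(G,D,E). at G \<and> at D \<and> E \<in> set phis \<and> (L = CL \<longrightarrow> E \<notin> D) \<and>
          (prec G D \<longrightarrow> (\<forall>A\<in>set phis. A \<in> D \<longrightarrow> \<not> der G (Rhd A E)))}"

definition Rc :: "(fm set \<times> fm set \<times> fm) rel" where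
  "Rc = {((G,D,E),(G',D',E')). (G,D,E) \<in> Wc \<and> (G',D',E') \<in> Wc \<and> (D = G' \<or> prec D G') \<and> prec D D'}"

definition Sc :: "(fm set \<times> fm set \<times> fm) rel" where
  "Sc = {((G,D,E),(G',D',E')). (G,D,E) \<in> Wc \<and> (G',D',E') \<in> Wc \<and>
          ((G' = G \<and> E' = E \<and> E \<notin> D') \<or> (prec G' G \<and> E' = Bot))}"

definition Vc :: "nat \<Rightarrow> fm set \<times> fm set \<times> fm \<Rightarrow> bool" where
  "Vc p x = (Var p \<in> fst (snd x))"

lemma phis_sub: "F \<in> set phis \<Longrightarrow> G \<in> set (subfm F) \<Longrightarrow> G \<in> set phis"
  using phis_closed by blast

lemma truth:
  "F \<in> set phis \<Longrightarrow> (G,D,E) \<in> Wc \<Longrightarrow> forces Rc Sc Vc (G,D,E) F \<longleftrightarrow> F \<in> D"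
proof (induction F arbitrary: G D E)
  case (Var p)
  then show ?case by (simp add: Vc_def)
next
  case Top
  then show ?case using top_mem phis_ps unfolding Wc_def by auto
next
  case Bot
  then show ?case using bot_nmem unfolding Wc_def by auto
next
  case (Imp F1 F2)
  have ph: "F1 \<in> set phis" "F2 \<in> set phis" using phis_sub[OF Imp.prems(1)] subfm_self by auto
  have "at D" using Imp.prems unfolding Wc_def by auto
  then show ?case using Imp.IH(1)[OF ph(1) Imp.prems(2)] Imp.IH(2)[OF ph(2) Imp.prems(2)]
      imp_mem[of D F1 F2] Imp.prems(1) phis_ps by auto
next
  case (Or F1 F2)
  have ph: "F1 \<in> set phis" "F2 \<in> set phis" using phis_sub[OF Or.prems(1)] subfm_self by auto
  have "at D" using Or.prems unfolding Wc_def by auto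
  then show ?case using Or.IH(1)[OF ph(1) Or.prems(2)] Or.IH(2)[OF ph(2) Or.prems(2)]
      or_mem[of D F1 F2] Or.prems(1) phis_ps by auto
next
  case (And F1 F2)
  have ph: "F1 \<in> set phis" "F2 \<in> set phis" using phis_sub[OF And.prems(1)] subfm_self by auto
  have "at D" using And.prems unfolding Wc_def by auto
  then show ?case using And.IH(1)[OF ph(1) And.prems(2)] And.IH(2)[OF ph(2) And.prems(2)]
      and_mem[of D F1 F2] And.prems(1) phis_ps by auto
next
  case (Box C)
  have C: "C \<in> set phis" using phis_sub[OF Box.prems(1)] subfm_self by auto
  have BC: "Box C \<in> set ps" using Box.prems(1) phis_ps by auto
  have atD: "at D" using Box.prems unfolding Wc_def by auto
  show ?case
  proof
    assume f: "forces Rc Sc Vc (G,D,E) (Box C)"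
    show "Box C \<in> D"
    proof (rule ccontr)
      assume "Box C \<notin> D"
      then have "\<not> der D (Box C)" using der_mem[OF atD BC] by blast
      then obtain D' where D': "at D'" "prec D D'" "C \<notin> D'" using succ[OF atD BC] by blast
      have yW: "(D, D', Bot) \<in> Wc" unfolding Wc_def
        using atD D' bot_phis bot_nmem bot_inv[OF atD D'(1)] by auto
      then have "((G,D,E),(D,D',Bot)) \<in> Rc" using Box.prems(2) D' unfolding Rc_def by auto
      then have "forces Rc Sc Vc (D,D',Bot) C" using f by simp
      then have "C \<in> D'" using Box.IH[OF C yW] by blast
      then show False using D' by blast
    qed
  next
    assume m: "Box C \<in> D"
    show "forces Rc Sc Vc (G,D,E) (Box C)"
    proof (simp only: forces.simps, intro allI impI)
      fix y assume y: "((G,D,E),y) \<in> Rc"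
      obtain G' D' E' where yy: "y = (G',D',E')" by (cases y) auto
      have "y \<in> Wc" "prec D D'" using y yy unfolding Rc_def by auto
      then have "C \<in> D'" using m unfolding prec_def by blast
      then show "forces Rc Sc Vc y C" using Box.IH[OF C] \<open>y \<in> Wc\<close> yy by blast
    qed
  qed
next
  case (Rhd A B)
  have ph: "A \<in> set phis" "B \<in> set phis" using phis_sub[OF Rhd.prems(1)] subfm_self by auto
  have ABps: "Rhd A B \<in> set ps" using Rhd.prems(1) phis_ps by auto
  have atG: "at G" and atD: "at D" using Rhd.prems unfolding Wc_def by auto
  show ?case
  proof
    assume f: "forces Rc Sc Vc (G,D,E) (Rhd A B)"
    show "Rhd A B \<in> D"
    proof (rule ccontr)
      assume nm: "Rhd A B \<notin> D"
      obtain D' where D': "at D'" "prec D D'" "A \<in> D'" "L = CL \<longrightarrow> B \<notin> D'"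
        "\<forall>A'\<in>set phis. A' \<in> D' \<longrightarrow> \<not> der D (Rhd A' B)"
        using back_lemma[OF atD ph Rhd.prems(1) nm] by blast
      have yW: "(D, D', B) \<in> Wc" unfolding Wc_def using atD D' ph by auto
      have xy: "((G,D,E),(D,D',B)) \<in> Rc" using Rhd.prems(2) yW D' unfolding Rc_def by auto
      have fa: "forces Rc Sc Vc (D,D',B) A" using Rhd.IH(1)[OF ph(1) yW] D' by blast
      have f': "\<forall>y. ((G,D,E),y) \<in> Rc \<and> forces Rc Sc Vc y A \<longrightarrow>
          (\<exists>z. ((G,D,E),z) \<in> Rc \<and> (y,z) \<in> Sc \<and> forces Rc Sc Vc z B)"
        using f by (simp only: forces.simps)
      obtain z where z: "((G,D,E),z) \<in> Rc" "((D,D',B),z) \<in> Sc" "forces Rc Sc Vc z B"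
        using f'[rule_format, OF conjI[OF xy fa]] by (elim exE conjE)
      obtain G'' D'' E'' where zz: "z = (G'',D'',E'')" by (cases z) auto
      have zW: "z \<in> Wc" and pre: "D = G'' \<or> prec D G''" using z(1) zz unfolding Rc_def by auto
      have "(G'' = D \<and> E'' = B \<and> B \<notin> D'') \<or> (prec G'' D \<and> E'' = Bot)"
        using z(2) zz unfolding Sc_def by auto
      moreover have "\<not> prec G'' D" using pre prec_irrefl prec_trans by blast
      ultimately have "B \<notin> D''" by blast
      moreover have "B \<in> D''" using z(3) Rhd.IH(2)[OF ph(2)] zW zz by blast
      ultimately show False by blast
    qed
  next
    assume m: "Rhd A B \<in> D"
    then have dAB: "der D (Rhd A B)" using mem_der ABps by blast
    show "forces Rc Sc Vc (G,D,E) (Rhd A B)"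
    proof (simp only: forces.simps, intro allI impI)
      fix y assume y: "((G,D,E),y) \<in> Rc \<and> forces Rc Sc Vc y A"
      obtain G' D' E' where yy: "y = (G',D',E')" by (cases y) auto
      have yW: "y \<in> Wc" and pre: "D = G' \<or> prec D G'" and pDD: "prec D D'"
        using y yy unfolding Rc_def by auto
      have AD': "A \<in> D'" using y yy Rhd.IH(1)[OF ph(1)] yW by blast
      have E': "E' \<in> set phis" "prec G' D' \<longrightarrow> (\<forall>A\<in>set phis. A \<in> D' \<longrightarrow> \<not> der G' (Rhd A E'))"
        using yW yy unfolding Wc_def by auto
      show "\<exists>z. ((G,D,E), z) \<in> Rc \<and> (y, z) \<in> Sc \<and> forces Rc Sc Vc z B"
      proof (cases "D = G'")
        case True
        then have nAE: "\<not> der D (Rhd A E')" using E' pDD AD' ph by blast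
        obtain D'' where D'': "at D''" "prec D D''" "B \<in> D''" "E' \<notin> D''"
          "\<forall>A'\<in>set phis. A' \<in> D'' \<longrightarrow> \<not> der D (Rhd A' E')"
          using fwd_lemma[OF atD ph E'(1) dAB nAE] by blast
        have zW: "(D, D'', E') \<in> Wc" unfolding Wc_def using atD D'' E' by auto
        have "((G,D,E),(D,D'',E')) \<in> Rc" using Rhd.prems(2) zW D'' unfolding Rc_def by auto
        moreover have "(y,(D,D'',E')) \<in> Sc" using yW zW yy True D'' unfolding Sc_def by auto
        moreover have "forces Rc Sc Vc (D,D'',E') B" using Rhd.IH(2)[OF ph(2) zW] D'' by blast
        ultimately show ?thesis by blast
      next
        case False
        then have pG: "prec D G'" using pre by blast
        have atD': "at D'" using yW yy unfolding Wc_def by auto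
        have nAE: "\<not> der D (Rhd A Bot)" using bot_inv[OF atD atD' pDD ph(1) AD'] .
        obtain D'' where D'': "at D''" "prec D D''" "B \<in> D''" "Bot \<notin> D''"
          "\<forall>A'\<in>set phis. A' \<in> D'' \<longrightarrow> \<not> der D (Rhd A' Bot)"
          using fwd_lemma[OF atD ph bot_phis dAB nAE] by blast
        have zW: "(D, D'', Bot) \<in> Wc" unfolding Wc_def using atD D'' bot_phis by auto
        have "((G,D,E),(D,D'',Bot)) \<in> Rc" using Rhd.prems(2) zW D'' unfolding Rc_def by auto
        moreover have "(y,(D,D'',Bot)) \<in> Sc" using yW zW yy pG unfolding Sc_def by auto
        moreover have "forces Rc Sc Vc (D,D'',Bot) B" using Rhd.IH(2)[OF ph(2) zW] D'' by blast
        ultimately show ?thesis by blast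
      qed
    qed
  qed
qed

end



context cm begin

lemma Wc_fin: "finite Wc"
proof -
  have "Wc \<subseteq> Pow (set ps) \<times> Pow (set ps) \<times> set phis" unfolding Wc_def at_def by auto
  moreover have "finite (Pow (set ps) \<times> Pow (set ps) \<times> set phis)" by simp
  ultimately show ?thesis by (rule finite_subset)
qed

lemma Rc_W: "Rc \<subseteq> Wc \<times> Wc" unfolding Rc_def by auto
lemma Sc_W: "Sc \<subseteq> Wc \<times> Wc" unfolding Sc_def by auto

lemma Rc_trans: "trans Rc"
proof (rule transI)
  fix x y z assume xy: "(x,y) \<in> Rc" and yz: "(y,z) \<in> Rc"
  obtain G D E where x: "x = (G,D,E)" by (cases x) auto
  obtain G' D' E' where y: "y = (G',D',E')" by (cases y) auto
  obtain G'' D'' E'' where z: "z = (G'',D'',E'')" by (cases z) auto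
  show "(x,z) \<in> Rc" using xy yz prec_trans unfolding x y z Rc_def by auto
qed

lemma Rc_irrefl: "(x,x) \<notin> Rc"
proof -
  obtain G D E where x: "x = (G,D,E)" by (cases x) auto
  show ?thesis using prec_irrefl unfolding x Rc_def by auto
qed

lemma Rc_wf: "wf (Rc\<inverse>)"
proof (rule finite_acyclic_wf_converse)
  show "finite Rc" using Wc_fin Rc_W by (meson finite_SigmaI finite_subset)
  show "acyclic Rc" unfolding acyclic_def using trancl_id[OF Rc_trans] Rc_irrefl by simp
qed

lemma Sc_trans: "trans Sc"
proof (rule transI)
  fix x y z assume xy: "(x,y) \<in> Sc" and yz: "(y,z) \<in> Sc"
  obtain G D E where x: "x = (G,D,E)" by (cases x) auto
  obtain G' D' E' where y: "y = (G',D',E')" by (cases y) auto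
  obtain G'' D'' E'' where z: "z = (G'',D'',E'')" by (cases z) auto
  show "(x,z) \<in> Sc" using xy yz prec_trans unfolding x y z Sc_def by auto
qed

lemma Sc_refl: "L = CL \<Longrightarrow> refl_on Wc Sc"
  unfolding refl_on_def using Sc_W unfolding Sc_def Wc_def by auto

lemma frame: "Wc \<noteq> {} \<Longrightarrow> L_frame L Wc Rc Sc"
proof -
  assume ne: "Wc \<noteq> {}"
  have "simplified_frame Wc Rc Sc"
    unfolding simplified_frame_def using ne Rc_W Sc_W Rc_trans Rc_wf by auto
  then show ?thesis using Sc_trans Sc_refl by (cases L) auto
qed

lemma countermodel:
  assumes A: "A \<in> set phis" and np: "\<not> prov L A"
  shows "\<not> valid_finite_frames L TYPE(nat) A"
proof -
  have "cns (Neg A)" unfolding cns_def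
  proof
    assume "prov L (Neg (Neg A))"
    then have "prov L A" by (rule p_t1) (auto simp: tautology_def Neg_def)
    then show False using np by blast
  qed
  then obtain G where G: "at G" "cns (And (Neg A) (cnj G))" using lind by blast
  have "A \<notin> G" using lind_nmem[OF G(2)] A phis_ps by (auto simp: p_taut tautology_def)
  have xW: "(G,G,Bot) \<in> Wc" unfolding Wc_def using G bot_phis bot_nmem prec_irrefl by auto
  then have "\<not> forces Rc Sc Vc (G,G,Bot) A" using truth[OF A xW] \<open>A \<notin> G\<close> by blast
  then show ?thesis using to_nat[OF frame Wc_fin xW] xW by blast
qed

end



lemma exists_cm: "\<exists>phis ps. cm phis ps \<and> A \<in> set phis"
proof -
  define phis where "phis = Bot # subfm A"
  define Xs where "Xs = {xs. set xs \<subseteq> set phis \<and> length xs \<le> length phis}"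
  define P0 where "P0 = set phis \<union> (\<lambda>(P,Q,xs). Box (Imp P (Or (disj xs) Q))) ` (set phis \<times> set phis \<times> Xs)"
  define Psi where "Psi = \<Union> ((set \<circ> subfm) ` P0)"
  have "finite Xs" unfolding Xs_def by (rule finite_lists_length_le) simp
  then have "finite P0" unfolding P0_def by simp
  then have "finite Psi" unfolding Psi_def by simp
  then obtain ps where ps: "set ps = Psi" "distinct ps" using finite_distinct_list by blast
  have sub0: "F \<in> P0 \<Longrightarrow> F \<in> Psi" for F unfolding Psi_def using subfm_self by fastforce
  have pc: "set (subfm F) \<subseteq> set phis" if "F \<in> set phis" for F
    using that subfm_trans unfolding phis_def by auto
  have "cm phis ps"
  proof
    show "distinct ps" by fact
    show "set phis \<subseteq> set ps" using sub0 ps unfolding P0_def by auto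
    show "set (subfm F) \<subseteq> set ps" if "F \<in> set ps" for F
      using that subfm_trans unfolding ps Psi_def by auto
    show "Bot \<in> set phis" unfolding phis_def by simp
    show "set (subfm F) \<subseteq> set phis" if "F \<in> set phis" for F using pc that by blast
    show "Box (Imp P (Or (disj (filter f phis)) Q)) \<in> set ps"
      if "P \<in> set phis" "Q \<in> set phis" for P Q f
    proof -
      have "filter f phis \<in> Xs" unfolding Xs_def by auto
      then have "Box (Imp P (Or (disj (filter f phis)) Q)) \<in> P0" unfolding P0_def using that by force
      then show ?thesis using sub0 ps by blast
    qed
  qed
  moreover have "A \<in> set phis" unfolding phis_def using subfm_self by simp
  ultimately show ?thesis by blast
qed

theorem theorem3p2:
  fixes L :: logic and A :: fm
  shows "(prov L A \<longrightarrow> valid_all_frames L TYPE('w) A)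
       \<and> (prov L A \<longleftrightarrow> valid_all_frames L TYPE(nat) A)
       \<and> (prov L A \<longleftrightarrow> valid_finite_frames L TYPE(nat) A)"
proof -
  have snd1: "prov L A \<Longrightarrow> valid_all_frames L TYPE('w) A"
    unfolding valid_all_frames_def using soundness by blast
  have snd2: "prov L A \<Longrightarrow> valid_all_frames L TYPE(nat) A"
    unfolding valid_all_frames_def using soundness by blast
  have af: "valid_all_frames L TYPE(nat) A \<Longrightarrow> valid_finite_frames L TYPE(nat) A"
    unfolding valid_all_frames_def valid_finite_frames_def by blast
  have cmp: "valid_finite_frames L TYPE(nat) A \<Longrightarrow> prov L A"
  proof (rule ccontr)
    assume v: "valid_finite_frames L TYPE(nat) A" and np: "\<not> prov L A"
    obtain phis ps where c: "cm phis ps" "A \<in> set phis" using exists_cm by blast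
    have "\<not> valid_finite_frames L TYPE(nat) A" using cm.countermodel[OF c(1) c(2) np] .
    then show False using v by blast
  qed
  show ?thesis using snd1 snd2 af cmp by blast
qed


end
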